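(* Let $(C_n)_{n\in\mathbb{N}}$ be a sequence of regular symmetric bodies in $\mathbb{R}^d$ converging in the Hausdorff metric to a regular symmetric body $C$. Then $\sup_{x\in\mathbb{B}^d}\|\varphi_{C_n}(x)-\varphi_C(x)\|\to0$ as $n\to\infty$.
   Context: A regular symmetric body is a compact convex $C\subset\mathbb{R}^d$ with non-empty interior, $C=-C$, that is smooth (unique supporting hyperplane at each boundary point) and strictly convex (each supporting hyperplane meets $C$ in one point). It defines the norm $\|x\|_C=\inf\{\lambda>0:x\in\lambda C\}$, and $\varphi_C(x)$ is the derivative of $\tfrac12\|\cdot\|_C^2$ at $x\ne0$, with $\varphi_C(0)=0$. $\|\cdot\|$ is the Euclidean norm and $\mathbb{B}^d$ its closed unit ball. *)

theory Defs
  imports "HOL-Analysis.Analysis"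
begin

definition hausdist :: "'a::metric_space set \<Rightarrow> 'a set \<Rightarrow> real" where
  "hausdist S T =
     (if S \<noteq> {} \<and> T \<noteq> {} \<and> bounded S \<and> bounded T
      then max (SUP x\<in>S. infdist x T) (SUP y\<in>T. infdist y S) else 0)"

text \<open>Supporting hyperplane {y. u . y = u . x} of C at the point x of C.\<close>
definition supporting_at :: "'a::euclidean_space set \<Rightarrow> 'a \<Rightarrow> 'a \<Rightarrow> bool" where
  "supporting_at C x u \<longleftrightarrow> x \<in> C \<and> u \<noteq> 0 \<and> (\<forall>y\<in>C. inner u y \<le> inner u x)"

definition regular_symmetric_body :: "'a::euclidean_space set \<Rightarrow> bool" where
  "regular_symmetric_body C \<longleftrightarrow>
     compact C \<and> convex C \<and> interior C \<noteq> {} \<and> (\<forall>x. x \<in> C \<longleftrightarrow> - x \<in> C) \<and>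
     \<comment> \<open>smooth: unique supporting hyperplane at each boundary point\<close>
     (\<forall>x\<in>frontier C. \<forall>u v. supporting_at C x u \<and> supporting_at C x v \<longrightarrow>
        {y. inner u y = inner u x} = {y. inner v y = inner v x}) \<and>
     \<comment> \<open>strictly convex: each supporting hyperplane meets C in exactly one point\<close>
     (\<forall>x u. supporting_at C x u \<longrightarrow> C \<inter> {y. inner u y = inner u x} = {x})"

definition gauge_norm :: "'a::euclidean_space set \<Rightarrow> 'a \<Rightarrow> real" where
  "gauge_norm C x = Inf {l. l > 0 \<and> x \<in> (\<lambda>y. l *\<^sub>R y) ` C}"

definition phi :: "'a::euclidean_space set \<Rightarrow> 'a \<Rightarrow> 'a" where
  "phi C x = (if x = 0 then 0 else
     (SOME g. ((\<lambda>y. (gauge_norm C y)\<^sup>2 / 2) has_derivative (\<lambda>h. inner g h)) (at x)))"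

end

theory Submission
  imports Defs
begin


lemma img_scale_iff:
  fixes C :: "'a::real_vector set"
  assumes "t \<noteq> 0"
  shows "x \<in> (\<lambda>y. t *\<^sub>R y) ` C \<longleftrightarrow> inverse t *\<^sub>R x \<in> C"
proof
  assume "x \<in> (\<lambda>y. t *\<^sub>R y) ` C"
  then obtain y where "y \<in> C" "x = t *\<^sub>R y" by auto
  then show "inverse t *\<^sub>R x \<in> C" using assms by simp
next
  assume "inverse t *\<^sub>R x \<in> C"
  moreover have "x = t *\<^sub>R (inverse t *\<^sub>R x)" using assms by simp
  ultimately show "x \<in> (\<lambda>y. t *\<^sub>R y) ` C" by blast
qed

lemma scale_mono_mem:
  fixes C :: "'a::real_vector set"
  assumes "convex C" "0 \<in> C" "0 < l" "l \<le> m" "x \<in> (\<lambda>y. l *\<^sub>R y) ` C"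
  shows "x \<in> (\<lambda>y. m *\<^sub>R y) ` C"
proof -
  have m: "m \<noteq> 0" "l \<noteq> 0" using assms by auto
  have c: "inverse l *\<^sub>R x \<in> C" using assms(5) img_scale_iff[OF m(2)] by blast
  have "(l / m) *\<^sub>R (inverse l *\<^sub>R x) + (1 - l / m) *\<^sub>R 0 \<in> C"
    using convexD[OF assms(1) c assms(2), of "l/m" "1 - l/m"] assms by auto
  moreover have "(l / m) *\<^sub>R (inverse l *\<^sub>R x) + (1 - l / m) *\<^sub>R 0 = inverse m *\<^sub>R x"
    using m by (simp add: field_simps)
  ultimately have "inverse m *\<^sub>R x \<in> C" by metis
  then show ?thesis using img_scale_iff[OF m(1), of x C] by blast
qed

locale gbody =
  fixes C :: "'a::euclidean_space set" and r :: real
  assumes cpt: "compact C" and cvx: "convex C" and rpos: "0 < r" and ball_sub: "cball 0 r \<subseteq> C"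
begin

abbreviation "N \<equiv> gauge_norm C"

definition "Sg x = {l. l > 0 \<and> x \<in> (\<lambda>y. l *\<^sub>R y) ` C}"

lemma zero_in: "0 \<in> C" using ball_sub rpos by auto

lemma N_def': "N x = Inf (Sg x)" unfolding gauge_norm_def Sg_def by simp

lemma Sg_bdd: "bdd_below (Sg x)" unfolding Sg_def by (rule bdd_belowI[of _ 0]) auto

lemma in_Sg_big: "norm x / r < t \<Longrightarrow> t \<in> Sg x"
proof -
  assume a: "norm x / r < t"
  have "0 \<le> norm x / r" using rpos by simp
  then have tp: "t > 0" using a by linarith
  have "norm (inverse t *\<^sub>R x) \<le> r"
  proof -
    have "norm x < t * r" using a rpos by (simp add: field_simps)
    then show ?thesis using tp by (simp add: field_simps)
  qed
  then have "inverse t *\<^sub>R x \<in> C" using ball_sub by auto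
  then show "t \<in> Sg x" unfolding Sg_def using tp img_scale_iff[of t x C] by auto
qed

lemma Sg_ne: "Sg x \<noteq> {}" using in_Sg_big[of x "norm x / r + 1"] by auto

lemma Sg_up: "l \<in> Sg x \<Longrightarrow> l \<le> m \<Longrightarrow> m \<in> Sg x"
  unfolding Sg_def using scale_mono_mem[OF cvx zero_in] by auto

lemma N_nonneg: "N x \<ge> 0"
  unfolding N_def' by (rule cInf_greatest[OF Sg_ne]) (auto simp: Sg_def)

lemma N_le_iff:
  assumes "t > 0"
  shows "N x \<le> t \<longleftrightarrow> x \<in> (\<lambda>y. t *\<^sub>R y) ` C"
proof
  assume "x \<in> (\<lambda>y. t *\<^sub>R y) ` C"
  then have "t \<in> Sg x" using assms unfolding Sg_def by auto
  then show "N x \<le> t" unfolding N_def' by (rule cInf_lower[OF _ Sg_bdd])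
next
  assume le: "N x \<le> t"
  have all: "s \<in> Sg x" if "s > t" for s
  proof -
    have "Inf (Sg x) < s" using le that N_def' by simp
    then obtain l where "l \<in> Sg x" "l < s" using cInf_less_iff[OF Sg_ne Sg_bdd] by auto
    then show ?thesis using Sg_up by auto
  qed
  define s where "s n = t + 1 / real (Suc n)" for n
  have sg: "s n > t" for n unfolding s_def by simp
  have spos: "s n > 0" for n using sg[of n] assms by linarith
  have mem: "inverse (s n) *\<^sub>R x \<in> C" for n
    using all[OF sg[of n]] spos[of n] img_scale_iff[of "s n" x C] unfolding Sg_def by auto
  have "s \<longlonglongrightarrow> t + 0" unfolding s_def
    by (intro tendsto_intros LIMSEQ_inverse_real_of_nat[unfolded inverse_eq_divide] )
  then have lim: "(\<lambda>n. inverse (s n) *\<^sub>R x) \<longlonglongrightarrow> inverse t *\<^sub>R x"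
    using assms by (auto intro!: tendsto_intros)
  have "inverse t *\<^sub>R x \<in> C"
    using closed_sequentially[OF compact_imp_closed[OF cpt], of "\<lambda>n. inverse (s n) *\<^sub>R x"] mem lim by blast
  then show "x \<in> (\<lambda>y. t *\<^sub>R y) ` C" using img_scale_iff[of t x C] assms by auto
qed

lemma N_le_iff': "t > 0 \<Longrightarrow> N x \<le> t \<longleftrightarrow> inverse t *\<^sub>R x \<in> C"
  using N_le_iff img_scale_iff by force

lemma N_upper: "N x \<le> norm x / r"
proof (cases "x = 0")
  case True
  have "N 0 \<le> t" if "t > 0" for t using N_le_iff'[OF that, of 0] zero_in by simp
  then have "N 0 \<le> 0" by (meson dense_ge)
  then show ?thesis using True by simp
next
  case False
  then have p: "norm x / r > 0" using rpos by simp
  have "norm (inverse (norm x / r) *\<^sub>R x) \<le> r" using False rpos by simp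
  then show ?thesis using N_le_iff'[OF p, of x] ball_sub by auto
qed

lemma N_zero[simp]: "N 0 = 0" using N_upper[of 0] N_nonneg[of 0] by simp

lemma N_le_one: "z \<in> C \<Longrightarrow> N z \<le> 1" using N_le_iff'[of 1 z] by simp

lemma N_self_mem: "x \<noteq> 0 \<Longrightarrow> N x > 0 \<and> inverse (N x) *\<^sub>R x \<in> C"
proof -
  assume x: "x \<noteq> 0"
  obtain R where R: "\<forall>y\<in>C. norm y \<le> R" using compact_imp_bounded[OF cpt] bounded_iff by blast
  have Rp: "R \<ge> 0" using R zero_in by force
  have Np: "N x > 0"
  proof (rule ccontr)
    assume "\<not> N x > 0"
    then have N0: "N x = 0" using N_nonneg[of x] by linarith
    define t where "t = norm x / (2 * (R + 1))"
    have tp: "t > 0" unfolding t_def using x Rp by simp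
    then have "inverse t *\<^sub>R x \<in> C" using N_le_iff'[OF tp, of x] N0 by simp
    then have "norm (inverse t *\<^sub>R x) \<le> R" using R by blast
    then have "norm x \<le> t * R" using tp by (simp add: field_simps)
    also have "t * R < norm x"
    proof -
      have "norm x > 0" using x by simp
      then have "R * norm x \<ge> 0" "norm x * 2 > 0" using Rp by auto
      then have "0 < R * norm x + norm x * 2" by linarith
      then show ?thesis unfolding t_def using x Rp by (simp add: field_simps)
    qed
    finally show False by simp
  qed
  then show ?thesis using N_le_iff'[OF Np, of x] by simp
qed

lemma N_homog: assumes "a > 0" shows "N (a *\<^sub>R x) = a * N x"
proof -
  have iff: "N (a *\<^sub>R x) \<le> t \<longleftrightarrow> a * N x \<le> t" if "t > 0" for t
  proof -
    have "N (a *\<^sub>R x) \<le> t \<longleftrightarrow> inverse t *\<^sub>R (a *\<^sub>R x) \<in> C" using N_le_iff'[OF that] by simp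
    also have "\<dots> \<longleftrightarrow> inverse (t / a) *\<^sub>R x \<in> C" using assms by (simp add: field_simps)
    also have "\<dots> \<longleftrightarrow> N x \<le> t / a" using N_le_iff'[of "t/a" x] that assms by simp
    also have "\<dots> \<longleftrightarrow> a * N x \<le> t" using assms by (simp add: field_simps)
    finally show ?thesis .
  qed
  have n1: "N (a *\<^sub>R x) \<ge> 0" and n2: "a * N x \<ge> 0" using N_nonneg assms by auto
  show ?thesis
  proof (rule ccontr)
    assume "N (a *\<^sub>R x) \<noteq> a * N x"
    define t where "t = (N (a *\<^sub>R x) + a * N x) / 2"
    then consider "N (a *\<^sub>R x) < a * N x" | "N (a *\<^sub>R x) > a * N x" using \<open>N (a *\<^sub>R x) \<noteq> a * N x\<close> by linarith
    then show False
    proof cases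
      case 1
      then have "t > 0" "N (a *\<^sub>R x) \<le> t" "\<not> a * N x \<le> t" using n1 n2 unfolding t_def by auto
      then show False using iff[of t] by blast
    next
      case 2
      then have "t > 0" "\<not> N (a *\<^sub>R x) \<le> t" "a * N x \<le> t" using n1 n2 unfolding t_def by auto
      then show False using iff[of t] by blast
    qed
  qed
qed

end


definition ff :: "'a::euclidean_space set \<Rightarrow> 'a \<Rightarrow> real" where
  "ff C y = (gauge_norm C y)\<^sup>2 / 2"

definition subg :: "('a::euclidean_space \<Rightarrow> real) \<Rightarrow> 'a \<Rightarrow> 'a \<Rightarrow> bool" where
  "subg f x v \<longleftrightarrow> (\<forall>y. f x + inner v (y - x) \<le> f y)"

context gbody begin

lemma p_not_interior:
  assumes x: "x \<noteq> 0"
  shows "inverse (N x) *\<^sub>R x \<notin> interior C"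
proof
  define p where "p = inverse (N x) *\<^sub>R x"
  have Np: "N x > 0" using N_self_mem[OF x] by simp
  have Npp: "N p = 1" unfolding p_def using N_homog[of "inverse (N x)" x] Np by simp
  have p0: "p \<noteq> 0" using Np x unfolding p_def by simp
  assume "inverse (N x) *\<^sub>R x \<in> interior C"
  then obtain e where e: "e > 0" "ball p e \<subseteq> C" using mem_interior p_def by metis
  define p' where "p' = (1 + e / (2 * norm p)) *\<^sub>R p"
  have "dist p p' = e / 2" unfolding p'_def dist_norm using p0 e
    by (simp add: algebra_simps)
  then have "p' \<in> C" using e by auto
  then have "N p' \<le> 1" by (rule N_le_one)
  moreover have ep: "e / (2 * norm p) > 0" using e p0 by simp
  moreover have "N p' = (1 + e / (2 * norm p)) * 1" unfolding p'_def
    using N_homog[of "1 + e / (2 * norm p)" p] Npp ep by simp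
  ultimately show False by simp
qed

lemma interior_ne: "interior C \<noteq> {}"
proof -
  have "ball 0 r \<subseteq> interior C" using ball_sub by (meson ball_subset_cball interior_maximal open_ball order_trans)
  then show ?thesis using rpos by auto
qed

lemma support_fun:
  assumes x: "x \<noteq> 0"
  shows "\<exists>w. inner w x = N x \<and> (\<forall>y. inner w y \<le> N y)"
proof -
  define p where "p = inverse (N x) *\<^sub>R x"
  have Np: "N x > 0" and pC: "p \<in> C" using N_self_mem[OF x] p_def by auto
  have cl: "closure C = C" using compact_imp_closed[OF cpt] by simp
  have ri: "rel_interior C = interior C" using rel_interior_nonempty_interior[OF interior_ne] .
  have "p \<in> closure C" "p \<notin> rel_interior C" using pC cl ri p_not_interior[OF x] p_def by auto
  then obtain a where a: "a \<noteq> 0" "\<And>y. y \<in> closure C \<Longrightarrow> a \<bullet> p \<le> a \<bullet> y"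
    using supporting_hyperplane_relative_frontier[OF cvx] by metis
  define u where "u = - a"
  have u0: "u \<noteq> 0" using a u_def by simp
  have usup: "u \<bullet> y \<le> u \<bullet> p" if "y \<in> C" for y using a(2)[of y] that cl u_def by simp
  have "(r / norm u) *\<^sub>R u \<in> C" using ball_sub rpos u0 by auto
  then have "u \<bullet> ((r / norm u) *\<^sub>R u) \<le> u \<bullet> p" by (rule usup)
  moreover have "u \<bullet> ((r / norm u) *\<^sub>R u) = r * norm u"
    using u0 by (simp add: inner_commute power2_norm_eq_inner[symmetric] power2_eq_square)
  moreover have "r * norm u > 0" using rpos u0 by simp
  ultimately have up: "u \<bullet> p > 0" by linarith
  define w where "w = inverse (u \<bullet> p) *\<^sub>R u"
  have "x = N x *\<^sub>R p" unfolding p_def using Np by simp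
  then have "u \<bullet> x = N x * (u \<bullet> p)" by (metis inner_scaleR_right)
  then have "inner w x = N x" unfolding w_def using up by simp
  moreover have "inner w y \<le> N y" for y
  proof (cases "y = 0")
    case True then show ?thesis by simp
  next
    case False
    define q where "q = inverse (N y) *\<^sub>R y"
    have Ny: "N y > 0" and qC: "q \<in> C" using N_self_mem[OF False] q_def by auto
    have "u \<bullet> q \<le> u \<bullet> p" using usup[OF qC] .
    then have wq: "inner w q \<le> 1" unfolding w_def using up by (simp add: field_simps)
    have "y = N y *\<^sub>R q" unfolding q_def using Ny by simp
    then have "inner w y = N y * inner w q" by (metis inner_scaleR_right)
    also have "\<dots> \<le> N y * 1" using wq Ny by (intro mult_left_mono) auto
    finally show ?thesis by simp
  qed
  ultimately show ?thesis by blast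
qed

lemma support_norm:
  assumes "\<forall>y. inner w y \<le> N y"
  shows "norm w \<le> 1 / r"
proof -
  have "inner w w \<le> N w" using assms by blast
  also have "\<dots> \<le> norm w / r" by (rule N_upper)
  finally have "norm w * norm w \<le> norm w / r" by (simp add: power2_eq_square[symmetric] power2_norm_eq_inner)
  then show ?thesis using rpos
    by (cases "w = 0") (auto simp: field_simps)
qed

lemma N_lip_half: "N y - N z \<le> norm (y - z) / r"
proof (cases "y = 0")
  case True
  have "norm z / r \<ge> 0" using rpos by simp
  then show ?thesis using N_nonneg[of z] True by simp
next
  case False
  then obtain w where w: "inner w y = N y" "\<forall>y. inner w y \<le> N y" using support_fun by blast
  have "N y - N z \<le> inner w y - inner w z" using w by (smt (verit))
  also have "\<dots> = inner w (y - z)" by (simp add: inner_diff_right)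
  also have "\<dots> \<le> norm w * norm (y - z)" by (rule norm_cauchy_schwarz)
  also have "\<dots> \<le> (1 / r) * norm (y - z)" using support_norm[OF w(2)] by (intro mult_right_mono) auto
  finally show ?thesis by simp
qed

lemma N_lip: "\<bar>N y - N z\<bar> \<le> norm (y - z) / r"
  using N_lip_half[of y z] N_lip_half[of z y] by (simp add: norm_minus_commute)

lemma N_cont: "continuous_on UNIV N"
proof (rule continuous_on_iff[THEN iffD2], intro ballI allI impI)
  fix x and e :: real assume "e > 0"
  show "\<exists>d>0. \<forall>x'\<in>UNIV. dist x' x < d \<longrightarrow> dist (N x') (N x) < e"
  proof (intro exI[of _ "e * r"] conjI ballI impI)
    show "e * r > 0" using \<open>e > 0\<close> rpos by simp
    fix x' assume "dist x' x < e * r"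
    then have "norm (x' - x) / r < e" using rpos by (simp add: dist_norm field_simps)
    then show "dist (N x') (N x) < e" using N_lip[of x' x] by (simp add: dist_real_def)
  qed
qed

lemma ff_cont: "continuous_on UNIV (ff C)"
  unfolding ff_def by (auto intro!: continuous_intros N_cont)

lemma ff_nonneg: "ff C y \<ge> 0" unfolding ff_def by simp

lemma ff_zero[simp]: "ff C 0 = 0" unfolding ff_def by simp

lemma ff_upper: "ff C y \<le> (norm y)\<^sup>2 / (2 * r\<^sup>2)"
proof -
  have "N y ^ 2 \<le> (norm y / r) ^ 2" using N_upper N_nonneg by (intro power_mono) auto
  then show ?thesis unfolding ff_def using rpos by (simp add: power_divide)
qed

lemma subg_exists: "\<exists>v. subg (ff C) x v"
proof (cases "x = 0")
  case True
  then have "subg (ff C) x 0" unfolding subg_def using ff_nonneg by simp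
  then show ?thesis by blast
next
  case False
  then obtain w where w: "inner w x = N x" "\<forall>y. inner w y \<le> N y" using support_fun by blast
  have "subg (ff C) x (N x *\<^sub>R w)" unfolding subg_def
  proof
    fix y
    have "inner (N x *\<^sub>R w) (y - x) = N x * inner w y - N x * N x"
      using w(1) by (simp add: inner_diff_right algebra_simps)
    moreover have "N x * inner w y \<le> N x * N y" using w(2) N_nonneg by (intro mult_left_mono) auto
    moreover have "0 \<le> (N y - N x)^2" by simp
    moreover have "(N y - N x)^2 = N y * N y - 2 * (N x * N y) + N x * N x"
      by (simp add: power2_eq_square algebra_simps)
    moreover have "ff C x = N x * N x / 2" "ff C y = N y * N y / 2"
      unfolding ff_def by (simp_all add: power2_eq_square)
    ultimately show "ff C x + inner (N x *\<^sub>R w) (y - x) \<le> ff C y"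
      by linarith
  qed
  then show ?thesis by blast
qed

lemma subg_bound:
  assumes "subg (ff C) x v"
  shows "norm v \<le> (norm x + 1)\<^sup>2 / (2 * r\<^sup>2)"
proof (cases "v = 0")
  case True then show ?thesis by simp
next
  case False
  define y where "y = x + (1 / norm v) *\<^sub>R v"
  have "ff C x + inner v (y - x) \<le> ff C y" using assms unfolding subg_def by blast
  moreover have "inner v (y - x) = norm v" unfolding y_def using False
    by (simp add: power2_norm_eq_inner[symmetric] power2_eq_square)
  moreover have "ff C y \<le> (norm y)\<^sup>2 / (2 * r\<^sup>2)" by (rule ff_upper)
  moreover have "norm y \<le> norm x + 1" unfolding y_def using False
    by (metis norm_triangle_ineq norm_sgn sgn_div_norm scaleR_conv_of_real divide_inverse_commute mult_1 div_by_1 mult.commute inverse_eq_divide)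
  moreover have "(norm y)\<^sup>2 \<le> (norm x + 1)\<^sup>2" using calculation(4) by (intro power_mono) auto
  ultimately show ?thesis using ff_nonneg[of x] rpos
    by (smt (verit, ccfv_SIG) divide_right_mono zero_le_power2 mult_nonneg_nonneg)
qed

end


lemma hyper_parallel:
  fixes u v p :: "'a::euclidean_space"
  assumes u0: "u \<noteq> 0" and eq: "{y. inner u y = inner u p} = {y. inner v y = inner v p}"
  shows "\<exists>l. v = l *\<^sub>R u"
proof -
  define l where "l = inner v u / inner u u"
  define w where "w = v - l *\<^sub>R u"
  have uu: "inner u u \<noteq> 0" using u0 by simp
  have uw: "inner u w = 0" unfolding w_def l_def using uu by (simp add: inner_diff_right inner_commute)
  have "p + w \<in> {y. inner u y = inner u p}" using uw by (simp add: inner_add_right)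
  then have "inner v (p + w) = inner v p" using eq by blast
  then have vw: "inner v w = 0" by (simp add: inner_add_right)
  have "inner w w = inner v w - l * inner u w" unfolding w_def
    by (simp add: inner_diff_left inner_commute)
  then have "inner w w = 0" using uw vw by simp
  then have "w = 0" by simp
  then show ?thesis unfolding w_def by auto
qed

context gbody begin

lemma subg_zero_unique:
  assumes "subg (ff C) 0 v" shows "v = 0"
proof -
  define y where "y = (r\<^sup>2) *\<^sub>R v"
  have "ff C 0 + inner v (y - 0) \<le> ff C y" using assms unfolding subg_def by blast
  then have "inner v y \<le> (norm y)\<^sup>2 / (2 * r\<^sup>2)" using ff_upper[of y] by simp
  moreover have "inner v y = r\<^sup>2 * (norm v)\<^sup>2" unfolding y_def by (simp add: power2_norm_eq_inner)
  moreover have "(norm y)\<^sup>2 / (2 * r\<^sup>2) = r\<^sup>2 * (norm v)\<^sup>2 / 2" unfolding y_def using rpos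
    by (simp add: power2_eq_square field_simps)
  ultimately have "r\<^sup>2 * (norm v)\<^sup>2 \<le> 0" by simp
  then have "(norm v)\<^sup>2 \<le> 0" using rpos by (simp add: mult_le_0_iff)
  then show ?thesis by simp
qed

lemma ff_homog: "t > 0 \<Longrightarrow> ff C (t *\<^sub>R x) = t\<^sup>2 * ff C x"
  unfolding ff_def using N_homog by (simp add: power_mult_distrib)

lemma subg_dot:
  assumes x: "x \<noteq> 0" and sg: "subg (ff C) x v"
  shows "inner v x = (N x)\<^sup>2"
proof -
  define a where "a = (N x)\<^sup>2"
  define c where "c = inner v x"
  have ap: "a > 0" unfolding a_def using N_self_mem[OF x] by simp
  have key: "a / 2 + (t - 1) * c \<le> t\<^sup>2 * a / 2" if "t > 0" for t
  proof -
    have "ff C x + inner v (t *\<^sub>R x - x) \<le> ff C (t *\<^sub>R x)" using sg unfolding subg_def by blast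
    moreover have "inner v (t *\<^sub>R x - x) = (t - 1) * c" unfolding c_def
      by (simp add: inner_diff_right algebra_simps)
    moreover have "ff C x = a / 2" unfolding ff_def a_def by simp
    ultimately show ?thesis using ff_homog[OF that, of x] by simp
  qed
  show ?thesis
  proof (rule ccontr)
    assume ne: "inner v x \<noteq> (N x)\<^sup>2"
    then have ne': "c \<noteq> a" unfolding a_def c_def .
    show False
    proof (cases "c > 0")
      case True
      have tp: "c / a > 0" using True ap by simp
      have "a / 2 + (c / a - 1) * c \<le> (c / a)\<^sup>2 * a / 2" using key[OF tp] .
      moreover have "a / 2 + (c / a - 1) * c - (c / a)\<^sup>2 * a / 2 = (c - a)\<^sup>2 / (2 * a)"
        using ap by (simp add: field_simps power2_eq_square)
      ultimately have "(c - a)\<^sup>2 / (2 * a) \<le> 0" by linarith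
      then have "(c - a)\<^sup>2 \<le> 0" using ap by (simp add: divide_le_0_iff)
      then show False using ne' by simp
    next
      case False
      have "a / 2 + (1/2 - 1) * c \<le> (1/2)\<^sup>2 * a / 2" using key[of "1/2"] by simp
      then show False using False ap by (simp add: power2_eq_square)
    qed
  qed
qed

lemma subg_support:
  assumes x: "x \<noteq> 0" and sg: "subg (ff C) x v"
  shows "inverse (N x) *\<^sub>R x \<in> frontier C \<and> supporting_at C (inverse (N x) *\<^sub>R x) v"
proof -
  define p where "p = inverse (N x) *\<^sub>R x"
  have Np: "N x > 0" and pC: "p \<in> C" using N_self_mem[OF x] p_def by auto
  have xp: "x = N x *\<^sub>R p" unfolding p_def using Np by simp
  have cl: "closure C = C" using compact_imp_closed[OF cpt] by simp
  have fr: "p \<in> frontier C" unfolding frontier_def using cl pC p_not_interior[OF x] p_def by auto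
  have vx: "inner v x = (N x)\<^sup>2" using subg_dot[OF x sg] .
  have v0: "v \<noteq> 0" using vx Np by auto
  have "inner v z \<le> inner v p" if "z \<in> C" for z
  proof -
    have Nz: "N z \<le> 1" using N_le_one[OF that] .
    have "N (N x *\<^sub>R z) = N x * N z" using N_homog[OF Np] .
    then have "N (N x *\<^sub>R z) \<le> N x" using Nz Np N_nonneg[of z] by (simp add: mult_le_cancel_left1)
    then have "ff C (N x *\<^sub>R z) \<le> ff C x" unfolding ff_def using N_nonneg
      by (simp add: power_mono)
    moreover have "ff C x + inner v (N x *\<^sub>R z - x) \<le> ff C (N x *\<^sub>R z)" using sg unfolding subg_def by blast
    ultimately have "inner v (N x *\<^sub>R z - x) \<le> 0" by linarith
    then have "N x * inner v z \<le> N x * inner v p"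
      using xp by (metis inner_diff_right inner_scaleR_right diff_le_0_iff_le)
    then show ?thesis using Np by simp
  qed
  then have "supporting_at C p v" unfolding supporting_at_def using pC v0 by blast
  then show ?thesis using fr p_def by simp
qed

lemma subg_unique:
  assumes reg: "regular_symmetric_body C" and sg1: "subg (ff C) x v1" and sg2: "subg (ff C) x v2"
  shows "v1 = v2"
proof (cases "x = 0")
  case True then show ?thesis using subg_zero_unique sg1 sg2 by blast
next
  case False
  define p where "p = inverse (N x) *\<^sub>R x"
  have s1: "p \<in> frontier C" "supporting_at C p v1" using subg_support[OF False sg1] p_def by auto
  have s2: "supporting_at C p v2" using subg_support[OF False sg2] p_def by auto
  have "{y. inner v1 y = inner v1 p} = {y. inner v2 y = inner v2 p}"
    using reg s1 s2 unfolding regular_symmetric_body_def by blast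
  moreover have "v1 \<noteq> 0" using s1 unfolding supporting_at_def by blast
  ultimately obtain l where l: "v2 = l *\<^sub>R v1" using hyper_parallel by blast
  have d1: "inner v1 x = (N x)\<^sup>2" and d2: "inner v2 x = (N x)\<^sup>2"
    using subg_dot[OF False sg1] subg_dot[OF False sg2] by auto
  have "(N x)\<^sup>2 > 0" using N_self_mem[OF False] by simp
  then have "l = 1" using d1 d2 l by simp
  then show ?thesis using l by simp
qed

end


lemma subgrad_uniform:
  fixes F :: "nat \<Rightarrow> 'a::euclidean_space \<Rightarrow> real" and f :: "'a \<Rightarrow> real"
    and Gs :: "nat \<Rightarrow> 'a \<Rightarrow> 'a" and G :: "'a \<Rightarrow> 'a"
  assumes K: "compact K"
    and sgn: "\<And>n x y. n \<ge> Nst \<Longrightarrow> x \<in> K \<Longrightarrow> F n x + inner (Gs n x) (y - x) \<le> F n y"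
    and sg: "\<And>x y. x \<in> K \<Longrightarrow> f x + inner (G x) (y - x) \<le> f y"
    and uniq: "\<And>x v. x \<in> K \<Longrightarrow> (\<And>y. f x + inner v (y - x) \<le> f y) \<Longrightarrow> v = G x"
    and bdn: "\<And>n x. n \<ge> Nst \<Longrightarrow> x \<in> K \<Longrightarrow> norm (Gs n x) \<le> B"
    and bd: "\<And>x. x \<in> K \<Longrightarrow> norm (G x) \<le> B"
    and cont: "continuous_on UNIV f"
    and pw: "\<And>y. (\<lambda>n. F n y) \<longlonglongrightarrow> f y"
    and unif: "\<And>e. e > 0 \<Longrightarrow> \<exists>M. \<forall>n\<ge>M. \<forall>x\<in>K. \<bar>F n x - f x\<bar> \<le> e"
    and e: "e > 0"
  shows "\<exists>M. \<forall>n\<ge>M. \<forall>x\<in>K. norm (Gs n x - G x) \<le> e"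
proof (rule ccontr)
  assume "\<not> ?thesis"
  then have "\<forall>M. \<exists>n x. n \<ge> max M Nst \<and> x \<in> K \<and> norm (Gs n x - G x) > e"
    by (meson not_le)
  then obtain nn xx where nx: "\<And>M. nn M \<ge> max M Nst \<and> xx M \<in> K \<and> norm (Gs (nn M) (xx M) - G (xx M)) > e"
    by metis
  define s where "s j = (xx j, Gs (nn j) (xx j), G (xx j))" for j
  define S where "S = K \<times> (cball (0::'a) B \<times> cball (0::'a) B)"
  have cS: "compact S" unfolding S_def using K by (intro compact_Times compact_cball)
  have sS: "s j \<in> S" for j
    using nx[of j] bdn[of "nn j" "xx j"] bd[of "xx j"] unfolding s_def S_def by auto
  obtain l r where lS: "l \<in> S" and r: "strict_mono r" and lim: "(s \<circ> r) \<longlonglongrightarrow> l"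
    using compact_imp_seq_compact[OF cS] sS unfolding seq_compact_def by metis
  obtain x0 v w where l: "l = (x0, v, w)" by (metis prod.collapse)
  have x0K: "x0 \<in> K" using lS l S_def by auto
  have X: "(\<lambda>j. xx (r j)) \<longlonglongrightarrow> x0"
    using tendsto_fst[OF lim] l unfolding s_def o_def by simp
  have V: "(\<lambda>j. Gs (nn (r j)) (xx (r j))) \<longlonglongrightarrow> v"
    using tendsto_fst[OF tendsto_snd[OF lim]] l unfolding s_def o_def by simp
  have W: "(\<lambda>j. G (xx (r j))) \<longlonglongrightarrow> w"
    using tendsto_snd[OF tendsto_snd[OF lim]] l unfolding s_def o_def by simp
  define m where "m j = nn (r j)" for j
  have mj: "m j \<ge> j" "m j \<ge> Nst" for j
    using nx[of "r j"] seq_suble[OF r, of j] unfolding m_def by auto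
  have mlim: "filterlim m sequentially sequentially"
    by (rule filterlim_at_top_mono[OF filterlim_ident]) (use mj in auto)
  have iscont: "isCont f x0" using cont by (simp add: continuous_on_eq_continuous_at)
  have fx: "(\<lambda>j. f (xx (r j))) \<longlonglongrightarrow> f x0" using isCont_tendsto_compose[OF iscont X] .
  have D: "(\<lambda>j. F (m j) (xx (r j)) - f (xx (r j))) \<longlonglongrightarrow> 0"
  proof (rule LIMSEQ_I)
    fix q :: real assume "q > 0"
    then obtain M where M: "\<forall>n\<ge>M. \<forall>x\<in>K. \<bar>F n x - f x\<bar> \<le> q / 2" using unif[of "q/2"] by auto
    show "\<exists>no. \<forall>n\<ge>no. norm (F (m n) (xx (r n)) - f (xx (r n)) - 0) < q"
    proof (intro exI allI impI)
      fix n assume "n \<ge> M"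
      then have "m n \<ge> M" using mj(1)[of n] by linarith
      then have "\<bar>F (m n) (xx (r n)) - f (xx (r n))\<bar> \<le> q / 2" using M nx[of "r n"] by blast
      then show "norm (F (m n) (xx (r n)) - f (xx (r n)) - 0) < q" using \<open>q > 0\<close> by simp
    qed
  qed
  have Fx: "(\<lambda>j. F (m j) (xx (r j))) \<longlonglongrightarrow> f x0"
    using tendsto_add[OF D fx] by simp
  have Fy: "(\<lambda>j. F (m j) y) \<longlonglongrightarrow> f y" for y
    using filterlim_compose[OF pw mlim] .
  have vsub: "f x0 + inner v (y - x0) \<le> f y" for y
  proof (rule tendsto_le[OF trivial_limit_sequentially Fy])
    show "(\<lambda>j. F (m j) (xx (r j)) + inner (Gs (nn (r j)) (xx (r j))) (y - xx (r j))) \<longlonglongrightarrow> f x0 + inner v (y - x0)"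
      by (intro tendsto_intros Fx V X)
    show "\<forall>\<^sub>F j in sequentially. F (m j) (xx (r j)) + inner (Gs (nn (r j)) (xx (r j))) (y - xx (r j)) \<le> F (m j) y"
      using sgn mj nx unfolding m_def by (intro always_eventually) blast
  qed
  have wsub: "f x0 + inner w (y - x0) \<le> f y" for y
  proof (rule tendsto_le[OF trivial_limit_sequentially tendsto_const])
    show "(\<lambda>j. f (xx (r j)) + inner (G (xx (r j))) (y - xx (r j))) \<longlonglongrightarrow> f x0 + inner w (y - x0)"
      by (intro tendsto_intros fx W X)
    show "\<forall>\<^sub>F j in sequentially. f (xx (r j)) + inner (G (xx (r j))) (y - xx (r j)) \<le> f y"
      using sg nx by (intro always_eventually) blast
  qed
  have "v = G x0" using uniq[OF x0K vsub] .
  moreover have "w = G x0" using uniq[OF x0K wsub] .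
  moreover have "e \<le> norm (v - w)"
  proof (rule tendsto_le[OF trivial_limit_sequentially tendsto_norm[OF tendsto_diff[OF V W]] tendsto_const])
    show "\<forall>\<^sub>F j in sequentially. e \<le> norm (Gs (nn (r j)) (xx (r j)) - G (xx (r j)))"
      using nx by (intro always_eventually) (simp add: less_imp_le)
  qed
  ultimately show False using e by simp
qed



context gbody begin

definition "GG x = (SOME v. subg (ff C) x v)"

lemma GG_subg: "subg (ff C) x (GG x)"
  unfolding GG_def using subg_exists by (rule someI_ex)

lemma GG_zero: assumes reg: "regular_symmetric_body C" shows "GG 0 = 0"
proof -
  have "subg (ff C) 0 0" unfolding subg_def using ff_nonneg by simp
  then show ?thesis using subg_unique[OF reg GG_subg] by blast
qed

lemma GG_cont:
  assumes reg: "regular_symmetric_body C"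
  shows "continuous (at x) GG"
proof (rule continuous_at_sequentiallyI)
  fix u assume u: "u \<longlonglongrightarrow> x"
  define h where "h n = u n - x" for n
  have h: "h \<longlonglongrightarrow> 0" unfolding h_def using tendsto_diff[OF u tendsto_const[of x]] by simp
  obtain N0 where N0: "\<forall>n\<ge>N0. norm (h n) < 1" using LIMSEQ_D[OF h, of 1] by auto
  define B where "B = (norm x + 2)\<^sup>2 / (2 * r\<^sup>2)"
  have iscont: "isCont (ff C) z" for z using ff_cont by (simp add: continuous_on_eq_continuous_at)
  have pw: "(\<lambda>n. ff C (y + h n)) \<longlonglongrightarrow> ff C y" for y
    using isCont_tendsto_compose[OF iscont tendsto_add[OF tendsto_const h]] by simp
  have main: "\<exists>M. \<forall>n\<ge>M. \<forall>z\<in>{x}. norm (GG (z + h n) - GG z) \<le> e" if e: "e > 0" for e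
  proof (rule subgrad_uniform[where F = "\<lambda>n y. ff C (y + h n)" and f = "ff C"
        and Gs = "\<lambda>n y. GG (y + h n)" and G = GG and Nst = N0 and B = B and K = "{x}"])
    show "compact {x}" by simp
    show "ff C (z + h n) + inner (GG (z + h n)) (y - z) \<le> ff C (y + h n)" for n z y
      using GG_subg[of "z + h n"] unfolding subg_def by (metis add_diff_cancel_right)
    show "ff C z + inner (GG z) (y - z) \<le> ff C y" for z y using GG_subg[of z] unfolding subg_def by blast
    show "v = GG z" if "z \<in> {x}" "\<And>y. ff C z + inner v (y - z) \<le> ff C y" for z v
      using subg_unique[OF reg GG_subg[of z], of v] that unfolding subg_def by auto
    show "norm (GG (z + h n)) \<le> B" if "n \<ge> N0" "z \<in> {x}" for n z
    proof -
      have "norm (z + h n) + 1 \<le> norm x + 2" using N0 that norm_triangle_ineq[of x "h n"] by auto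
      then have "(norm (z + h n) + 1)\<^sup>2 \<le> (norm x + 2)\<^sup>2" by (intro power_mono) auto
      then have "(norm (z + h n) + 1)\<^sup>2 / (2 * r\<^sup>2) \<le> B" unfolding B_def using rpos
        by (intro divide_right_mono) auto
      then show ?thesis using subg_bound[OF GG_subg[of "z + h n"]] by linarith
    qed
    show "norm (GG z) \<le> B" if "z \<in> {x}" for z
    proof -
      have "(norm z + 1)\<^sup>2 \<le> (norm x + 2)\<^sup>2" using that by (intro power_mono) auto
      then have "(norm z + 1)\<^sup>2 / (2 * r\<^sup>2) \<le> B" unfolding B_def using rpos
        by (intro divide_right_mono) auto
      then show ?thesis using subg_bound[OF GG_subg[of z]] by linarith
    qed
    show "continuous_on UNIV (ff C)" by (rule ff_cont)
    show "(\<lambda>n. ff C (y + h n)) \<longlonglongrightarrow> ff C y" for y by (rule pw)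
    show "\<exists>M. \<forall>n\<ge>M. \<forall>z\<in>{x}. \<bar>ff C (z + h n) - ff C z\<bar> \<le> e'" if e': "e' > 0" for e'
    proof -
      obtain M where "\<forall>n\<ge>M. norm (ff C (x + h n) - ff C x) < e'" using LIMSEQ_D[OF pw[of x] e'] by auto
      then show ?thesis by (intro exI[of _ M]) auto
    qed
    show "e > 0" by (rule e)
  qed
  show "(\<lambda>n. GG (u n)) \<longlonglongrightarrow> GG x"
  proof (rule LIMSEQ_I)
    fix q :: real assume q: "q > 0"
    then obtain M where "\<forall>n\<ge>M. norm (GG (x + h n) - GG x) \<le> q / 2" using main[of "q/2"] by auto
    then have "\<forall>n\<ge>M. norm (GG (u n) - GG x) < q" using q unfolding h_def by fastforce
    then show "\<exists>no. \<forall>n\<ge>no. norm (GG (u n) - GG x) < q" by blast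
  qed
qed

lemma ff_deriv:
  assumes reg: "regular_symmetric_body C"
  shows "(ff C has_derivative (\<lambda>h. inner (GG x) h)) (at x)"
  unfolding has_derivative_at_alt
proof (intro conjI allI impI)
  show "bounded_linear (\<lambda>h. inner (GG x) h)" by (rule bounded_linear_inner_right)
  fix e :: real assume e: "e > 0"
  have "GG \<midarrow>x\<rightarrow> GG x" using GG_cont[OF reg] by (simp add: isCont_def)
  then obtain s where s: "s > 0" "\<And>y. y \<noteq> x \<and> norm (y - x) < s \<Longrightarrow> norm (GG y - GG x) < e"
    unfolding LIM_eq using e by blast
  show "\<exists>d>0. \<forall>y. norm (y - x) < d \<longrightarrow> norm (ff C y - ff C x - inner (GG x) (y - x)) \<le> e * norm (y - x)"
  proof (intro exI[of _ s] conjI allI impI)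
    show "s > 0" by (rule s(1))
    fix y assume y: "norm (y - x) < s"
    have lo: "0 \<le> ff C y - ff C x - inner (GG x) (y - x)"
      using GG_subg[of x] unfolding subg_def by (smt (verit))
    have "ff C y + inner (GG y) (x - y) \<le> ff C x" using GG_subg[of y] unfolding subg_def by blast
    then have "ff C y - ff C x - inner (GG x) (y - x) \<le> inner (GG y - GG x) (y - x)"
      by (simp add: inner_diff_left inner_diff_right algebra_simps)
    also have "\<dots> \<le> norm (GG y - GG x) * norm (y - x)" by (rule norm_cauchy_schwarz)
    also have "\<dots> \<le> e * norm (y - x)"
    proof (cases "y = x")
      case True then show ?thesis by simp
    next
      case False
      then have "norm (GG y - GG x) \<le> e" using s(2)[of y] y by simp
      then show ?thesis by (intro mult_right_mono) auto
    qed
    finally show "norm (ff C y - ff C x - inner (GG x) (y - x)) \<le> e * norm (y - x)"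
      using lo by simp
  qed
qed

lemma phi_eq:
  assumes reg: "regular_symmetric_body C"
  shows "phi C x = GG x"
proof (cases "x = 0")
  case True then show ?thesis unfolding phi_def using GG_zero[OF reg] by simp
next
  case False
  have ffe: "(\<lambda>y. (gauge_norm C y)\<^sup>2 / 2) = ff C" unfolding ff_def by (rule ext) simp
  have d: "((\<lambda>y. (gauge_norm C y)\<^sup>2 / 2) has_derivative (\<lambda>h. inner (GG x) h)) (at x)"
    using ff_deriv[OF reg] ffe by simp
  have "(SOME g. ((\<lambda>y. (gauge_norm C y)\<^sup>2 / 2) has_derivative (\<lambda>h. inner g h)) (at x)) = GG x"
  proof (rule some_equality)
    show "((\<lambda>y. (gauge_norm C y)\<^sup>2 / 2) has_derivative (\<lambda>h. inner (GG x) h)) (at x)" by (rule d)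
    fix g assume "((\<lambda>y. (gauge_norm C y)\<^sup>2 / 2) has_derivative (\<lambda>h. inner g h)) (at x)"
    then have "(\<lambda>h. inner g h) = (\<lambda>h. inner (GG x) h)" using has_derivative_unique d by blast
    then have "inner g (g - GG x) = inner (GG x) (g - GG x)" by metis
    then have "inner (g - GG x) (g - GG x) = 0" by (simp add: inner_diff_left)
    then show "g = GG x" by simp
  qed
  then show ?thesis unfolding phi_def using False by simp
qed

end


lemma reg_gbody:
  assumes reg: "regular_symmetric_body C"
  shows "\<exists>r. gbody C r"
proof -
  have cpt: "compact C" and cvx: "convex C" and int: "interior C \<noteq> {}"
    and sym: "\<And>x. x \<in> C \<longleftrightarrow> - x \<in> C"
    using reg unfolding regular_symmetric_body_def by blast+
  obtain a where "a \<in> interior C" using int by blast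
  then obtain d where d: "d > 0" "ball a d \<subseteq> C" using mem_interior by metis
  have "cball 0 (d/2) \<subseteq> C"
  proof
    fix z :: 'a assume z: "z \<in> cball 0 (d/2)"
    have "a + z \<in> ball a d" using z d by (auto simp: dist_norm)
    then have p1: "a + z \<in> C" using d by blast
    have "a - z \<in> ball a d" using z d by (auto simp: dist_norm)
    then have "a - z \<in> C" using d by blast
    then have p2: "- a + z \<in> C" using sym[of "- a + z"] by simp
    have "(1/2) *\<^sub>R (a + z) + (1/2) *\<^sub>R (- a + z) \<in> C"
      using convexD[OF cvx p1 p2, of "1/2" "1/2"] by simp
    moreover have "(1/2) *\<^sub>R (a + z) + (1/2) *\<^sub>R (- a + z) = z"
      by (simp add: algebra_simps flip: scaleR_add_left)
    ultimately show "z \<in> C" by simp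
  qed
  then have "gbody C (d/2)" using cpt cvx d by unfold_locales auto
  then show ?thesis by blast
qed

lemma haus_close:
  fixes S T :: "'a::euclidean_space set"
  assumes S: "compact S" "S \<noteq> {}" and T: "compact T" "T \<noteq> {}" and x: "x \<in> S"
  shows "\<exists>y\<in>T. dist x y \<le> hausdist S T"
proof -
  have "bounded ((\<lambda>x. infdist x T) ` S)"
    by (intro compact_imp_bounded compact_continuous_image S continuous_intros)
  then have bdd: "bdd_above ((\<lambda>x. infdist x T) ` S)" by (rule bounded_imp_bdd_above)
  have "infdist x T \<le> (SUP x\<in>S. infdist x T)" by (rule cSUP_upper[OF x bdd])
  also have "\<dots> \<le> hausdist S T" unfolding hausdist_def
    using S T compact_imp_bounded by auto
  finally have le: "infdist x T \<le> hausdist S T" .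
  obtain y where "y \<in> T" "infdist x T = dist x y"
    using infdist_attains_inf[OF compact_imp_closed[OF T(1)] T(2)] by metis
  then show ?thesis using le by auto
qed

lemma hausdist_sym: "hausdist S T = hausdist T S"
  unfolding hausdist_def by (auto simp: max.commute)

lemma scale_in:
  fixes A :: "'a::euclidean_space set"
  assumes cvx: "convex A" and ball: "cball 0 \<rho> \<subseteq> A" and rho: "\<rho> > 0"
    and c: "c \<in> A" "dist x c \<le> \<epsilon>"
  shows "inverse (1 + \<epsilon> / \<rho>) *\<^sub>R x \<in> A"
proof (cases "\<epsilon> = 0")
  case True then show ?thesis using c by simp
next
  case False
  have ep: "\<epsilon> > 0" using False c(2) zero_le_dist[of x c] by linarith
  define e where "e = x - c"
  have ne: "norm e \<le> \<epsilon>" using c(2) unfolding e_def by (simp add: dist_norm)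
  define b where "b = (\<rho> / \<epsilon>) *\<^sub>R e"
  have "norm b \<le> \<rho>" unfolding b_def using ne ep rho by (simp add: field_simps)
  then have bA: "b \<in> A" using ball by auto
  define mu where "mu = inverse (1 + \<epsilon> / \<rho>)"
  have mu: "0 \<le> mu" "mu \<le> 1" unfolding mu_def using ep rho by (auto simp: field_simps)
  have "mu *\<^sub>R c + (1 - mu) *\<^sub>R b \<in> A" using convexD[OF cvx c(1) bA, of mu "1 - mu"] mu by simp
  moreover have "mu *\<^sub>R c + (1 - mu) *\<^sub>R b = mu *\<^sub>R x"
  proof -
    have "1 - mu = mu * (\<epsilon> / \<rho>)" unfolding mu_def using ep rho by (simp add: field_simps)
    then have "(1 - mu) *\<^sub>R b = mu *\<^sub>R e" unfolding b_def using ep rho by simp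
    then show ?thesis unfolding e_def by (simp add: algebra_simps)
  qed
  ultimately show ?thesis unfolding mu_def by simp
qed

lemma gauge_compare:
  assumes A: "gbody A \<rho>" and D: "gbody D \<rho>'" and eps: "\<epsilon> \<ge> 0"
    and close: "\<And>x. x \<in> D \<Longrightarrow> \<exists>c\<in>A. dist x c \<le> \<epsilon>"
  shows "gauge_norm A y \<le> (1 + \<epsilon> / \<rho>) * gauge_norm D y"
proof -
  have rho: "\<rho> > 0" using A gbody.rpos by blast
  define L where "L = 1 + \<epsilon> / \<rho>"
  have "\<epsilon> / \<rho> \<ge> 0" using rho eps by simp
  then have L: "L > 0" "L \<ge> 1" unfolding L_def by auto
  have "gauge_norm A y / L \<le> t" if t: "t > gauge_norm D y" for t
  proof -
    have tp: "t > 0" using t gbody.N_nonneg[OF D, of y] by linarith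
    have "inverse t *\<^sub>R y \<in> D" using gbody.N_le_iff'[OF D tp, of y] t by simp
    then obtain c where "c \<in> A" "dist (inverse t *\<^sub>R y) c \<le> \<epsilon>" using close by blast
    then have "inverse L *\<^sub>R (inverse t *\<^sub>R y) \<in> A"
      unfolding L_def using scale_in[OF gbody.cvx[OF A] gbody.ball_sub[OF A] rho] by blast
    then have "inverse (t * L) *\<^sub>R y \<in> A" by (simp add: mult.commute)
    then have "gauge_norm A y \<le> t * L" using gbody.N_le_iff'[OF A, of "t * L" y] tp L by simp
    then show ?thesis using L by (simp add: field_simps)
  qed
  then have "gauge_norm A y / L \<le> gauge_norm D y" by (meson dense_ge)
  then show ?thesis unfolding L_def[symmetric] using L by (simp add: field_simps)
qed

lemma inner_ball:
  fixes C D :: "'a::euclidean_space set"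
  assumes C: "gbody C r" and D: "compact D" "convex D" and eps: "\<epsilon> < r / 2"
    and close: "\<And>c. c \<in> C \<Longrightarrow> \<exists>x\<in>D. dist c x \<le> \<epsilon>"
  shows "cball 0 (r/2) \<subseteq> D"
proof
  fix z :: 'a assume z: "z \<in> cball 0 (r/2)"
  have rp: "r > 0" using C gbody.rpos by blast
  show "z \<in> D"
  proof (rule ccontr)
    assume zD: "z \<notin> D"
    obtain a b where ab: "inner a z < b" "\<forall>x\<in>D. inner a x > b"
      using separating_hyperplane_closed_point[OF D(2) compact_imp_closed[OF D(1)] zD] by blast
    have a0: "a \<noteq> 0"
    proof
      assume "a = 0"
      moreover obtain x where "x \<in> D" using close gbody.zero_in[OF C] by blast
      ultimately show False using ab by auto
    qed
    define q where "q = - (r / norm a) *\<^sub>R a"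
    have "norm q = r" unfolding q_def using a0 rp by simp
    then have "q \<in> C" using gbody.ball_sub[OF C] by auto
    then obtain x where x: "x \<in> D" "dist q x \<le> \<epsilon>" using close by blast
    have aq: "inner a q = - r * norm a" unfolding q_def using a0
      by (simp add: power2_norm_eq_inner[symmetric] power2_eq_square)
    have "inner a (x - q) \<le> norm a * norm (x - q)" by (rule norm_cauchy_schwarz)
    also have "\<dots> \<le> norm a * \<epsilon>" using x(2) by (intro mult_left_mono) (auto simp: dist_norm norm_minus_commute)
    finally have "inner a x \<le> - r * norm a + norm a * \<epsilon>" using aq by (simp add: inner_diff_right)
    moreover have "- inner a z \<le> norm a * norm z"
      using norm_cauchy_schwarz[of a "- z"] by simp
    moreover have "norm a * norm z \<le> norm a * (r/2)" using z by (intro mult_left_mono) auto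
    moreover have "norm a * \<epsilon> < norm a * (r / 2)" using eps a0 by simp
    ultimately have "inner a x < inner a z" by (simp add: algebra_simps)
    then show False using ab x(1) by force
  qed
qed



lemma ff_diff_bound:
  fixes a b e s r :: real
  assumes a: "0 \<le> a" "a \<le> 2 * s / r" and b: "0 \<le> b" "b \<le> s / r"
    and ab: "b \<le> (1 + e / r) * a" and ba: "a \<le> (1 + e / (r/2)) * b"
    and e: "e \<ge> 0" and r: "r > 0"
  shows "\<bar>a\<^sup>2 / 2 - b\<^sup>2 / 2\<bar> \<le> 3 * e * s\<^sup>2 / r ^ 3"
proof -
  have "0 \<le> s / r" using b by linarith
  then have s: "s \<ge> 0" using r by (simp add: zero_le_divide_iff)
  have er: "e / r \<ge> 0" using e r by simp
  have "a - b \<le> (2 * e / r) * b" using ba r by (simp add: field_simps)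
  also have "\<dots> \<le> (2 * e / r) * (s / r)" using b er by (intro mult_left_mono) auto
  finally have d1: "a - b \<le> 2 * e * s / r\<^sup>2" by (simp add: power2_eq_square)
  have "b - a \<le> (e / r) * a" using ab by (simp add: field_simps)
  also have "\<dots> \<le> (e / r) * (2 * s / r)" using a er by (intro mult_left_mono) auto
  finally have d2: "b - a \<le> 2 * e * s / r\<^sup>2" by (simp add: power2_eq_square mult.assoc mult.left_commute)
  have d: "\<bar>a - b\<bar> \<le> 2 * e * s / r\<^sup>2" using d1 d2 by linarith
  have "a + b \<le> 2 * s / r + s / r" using a b by linarith
  also have "2 * s / r + s / r = (2 * s + s) / r" by (rule add_divide_distrib[symmetric])
  also have "2 * s + s = 3 * s" by simp
  finally have sum: "a + b \<le> 3 * s / r" .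
  have sq: "a\<^sup>2 - b\<^sup>2 = (a - b) * (a + b)" by (simp add: power2_eq_square algebra_simps)
  have "a\<^sup>2 / 2 - b\<^sup>2 / 2 = (a\<^sup>2 - b\<^sup>2) / 2" by (rule diff_divide_distrib[symmetric])
  also have "\<dots> = (a - b) * (a + b) / 2" using sq by simp
  finally have eq: "a\<^sup>2 / 2 - b\<^sup>2 / 2 = (a - b) * (a + b) / 2" .
  have "\<bar>a\<^sup>2 / 2 - b\<^sup>2 / 2\<bar> = \<bar>(a - b) * (a + b) / 2\<bar>" by (simp only: eq)
  also have "\<dots> = \<bar>(a - b) * (a + b)\<bar> / 2" by simp
  also have "\<dots> = \<bar>a - b\<bar> * (a + b) / 2" using a b by (simp add: abs_mult)
  also have "\<dots> \<le> (2 * e * s / r\<^sup>2) * (3 * s / r) / 2"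
    using d sum a b by (intro divide_right_mono mult_mono) auto
  also have "\<dots> = 3 * e * s\<^sup>2 / r ^ 3"
    by (simp add: power2_eq_square power3_eq_cube)
  finally show ?thesis .
qed

theorem proposition4p6:
  fixes Cs :: "nat \<Rightarrow> 'a::euclidean_space set" and C :: "'a set"
  assumes "\<And>n. regular_symmetric_body (Cs n)"
    and "regular_symmetric_body C"
    and "(\<lambda>n. hausdist (Cs n) C) \<longlonglongrightarrow> 0"
  shows "(\<lambda>n. SUP x\<in>cball 0 1. norm (phi (Cs n) x - phi C x)) \<longlonglongrightarrow> 0"
proof -
  note regn = assms(1) and reg = assms(2)
  obtain r where gC: "gbody C r" using reg_gbody[OF reg] by blast
  have rp: "r > 0" using gC gbody.rpos by blast
  define eps where "eps n = hausdist (Cs n) C" for n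
  have epsl: "eps \<longlonglongrightarrow> 0" using assms(3) unfolding eps_def .
  obtain N1 where N1: "\<forall>n\<ge>N1. norm (eps n - 0) < r / 2" using LIMSEQ_D[OF epsl, of "r/2"] rp by auto
  have cC: "compact C" "C \<noteq> {}" using gbody.cpt[OF gC] gbody.zero_in[OF gC] by auto
  have cCs: "compact (Cs n)" "convex (Cs n)" "Cs n \<noteq> {}" for n
  proof -
    obtain rn where g: "gbody (Cs n) rn" using reg_gbody[OF regn[of n]] by blast
    show "compact (Cs n)" "convex (Cs n)" "Cs n \<noteq> {}" using gbody.cpt[OF g] gbody.cvx[OF g] gbody.zero_in[OF g] by auto
  qed
  have close1: "\<exists>c\<in>C. dist x c \<le> eps n" if "x \<in> Cs n" for n x
    using haus_close[OF cCs(1) cCs(3) cC that] unfolding eps_def by blast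
  have close2: "\<exists>x\<in>Cs n. dist c x \<le> eps n" if "c \<in> C" for n c
    using haus_close[OF cC cCs(1) cCs(3) that] hausdist_sym unfolding eps_def by metis
  have eps0: "eps n \<ge> 0" for n using close2[OF gbody.zero_in[OF gC], of n]
    by (meson order_trans zero_le_dist)
  have epsr: "eps n < r / 2" if "n \<ge> N1" for n using N1 that by auto
  have gn: "gbody (Cs n) (r/2)" if "n \<ge> N1" for n
  proof -
    have "cball 0 (r/2) \<subseteq> Cs n" using inner_ball[OF gC cCs(1) cCs(2) epsr[OF that] close2] .
    then show ?thesis using cCs[of n] rp by unfold_locales auto
  qed
  have ffb: "\<bar>ff (Cs n) y - ff C y\<bar> \<le> 3 * eps n * (norm y)\<^sup>2 / r ^ 3" if n: "n \<ge> N1" for n y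
  proof -
    have c1: "gauge_norm C y \<le> (1 + eps n / r) * gauge_norm (Cs n) y"
      using gauge_compare[OF gC gn[OF n] eps0 close1] .
    have c2: "gauge_norm (Cs n) y \<le> (1 + eps n / (r/2)) * gauge_norm C y"
      using gauge_compare[OF gn[OF n] gC eps0 close2] .
    have u1: "gauge_norm (Cs n) y \<le> 2 * norm y / r" using gbody.N_upper[OF gn[OF n], of y] by (simp add: mult.commute)
    have u2: "gauge_norm C y \<le> norm y / r" using gbody.N_upper[OF gC, of y] .
    show ?thesis unfolding ff_def
      using ff_diff_bound[OF gbody.N_nonneg[OF gn[OF n]] u1 gbody.N_nonneg[OF gC] u2 c1 c2 eps0 rp] .
  qed
  have conv: "\<exists>M. \<forall>n\<ge>M. \<bar>X n\<bar> \<le> e"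
    if X: "\<And>n. n \<ge> N1 \<Longrightarrow> \<bar>X n\<bar> \<le> c * eps n" and c: "c > 0" and e: "e > 0" for X :: "nat \<Rightarrow> real" and c e
  proof -
    obtain M where M: "\<forall>n\<ge>M. norm (eps n - 0) < e / c" using LIMSEQ_D[OF epsl, of "e/c"] c e by auto
    have "\<bar>X n\<bar> \<le> e" if "n \<ge> max M N1" for n
    proof -
      have "eps n < e / c" using M that by auto
      then have "c * eps n \<le> e" using c by (simp add: field_simps)
      then show ?thesis using X[of n] that by simp
    qed
    then show ?thesis by blast
  qed
  have phisubn: "subg (ff (Cs n)) x (phi (Cs n) x)" if "n \<ge> N1" for n x
    using gbody.GG_subg[OF gn[OF that]] gbody.phi_eq[OF gn[OF that] regn] by metis
  have phisub: "subg (ff C) x (phi C x)" for x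
    using gbody.GG_subg[OF gC] gbody.phi_eq[OF gC reg] by metis
  have main: "\<exists>M. \<forall>n\<ge>M. \<forall>x\<in>cball 0 1. norm (phi (Cs n) x - phi C x) \<le> e" if e: "e > 0" for e
  proof (rule subgrad_uniform[where F = "\<lambda>n. ff (Cs n)" and f = "ff C" and Gs = "\<lambda>n. phi (Cs n)"
        and G = "phi C" and Nst = N1 and B = "8 / r\<^sup>2" and K = "cball 0 1"])
    show "compact (cball (0::'a) 1)" by simp
    show "ff (Cs n) x + inner (phi (Cs n) x) (y - x) \<le> ff (Cs n) y" if "n \<ge> N1" for n x y
      using phisubn[OF that] unfolding subg_def by blast
    show "ff C x + inner (phi C x) (y - x) \<le> ff C y" for x y using phisub unfolding subg_def by blast
    show "v = phi C x" if "\<And>y. ff C x + inner v (y - x) \<le> ff C y" for x v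
      using gbody.subg_unique[OF gC reg, of x v "phi C x"] phisub that unfolding subg_def by blast
    show "norm (phi (Cs n) x) \<le> 8 / r\<^sup>2" if "n \<ge> N1" "x \<in> cball 0 1" for n x
    proof -
      have "(norm x + 1)\<^sup>2 \<le> 2\<^sup>2" using that by (intro power_mono) auto
      then have "(norm x + 1)\<^sup>2 / (2 * (r/2)\<^sup>2) \<le> 4 / (2 * (r/2)\<^sup>2)" using rp
        by (intro divide_right_mono) auto
      also have "\<dots> = 8 / r\<^sup>2" using rp by (simp add: field_simps power2_eq_square)
      finally show ?thesis using gbody.subg_bound[OF gn[OF that(1)] phisubn[OF that(1), of x]] by linarith
    qed
    show "norm (phi C x) \<le> 8 / r\<^sup>2" if "x \<in> cball 0 1" for x
    proof -
      have "(norm x + 1)\<^sup>2 \<le> 2\<^sup>2" using that by (intro power_mono) auto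
      then have "(norm x + 1)\<^sup>2 / (2 * r\<^sup>2) \<le> 4 / (2 * r\<^sup>2)" using rp
        by (intro divide_right_mono) auto
      also have "\<dots> \<le> 8 / r\<^sup>2" using rp by (simp add: field_simps)
      finally show ?thesis using gbody.subg_bound[OF gC phisub[of x]] by linarith
    qed
    show "continuous_on UNIV (ff C)" by (rule gbody.ff_cont[OF gC])
    show "(\<lambda>n. ff (Cs n) y) \<longlonglongrightarrow> ff C y" for y
    proof (rule LIMSEQ_I)
      fix q :: real assume q: "q > 0"
      define c where "c = 3 * ((norm y)\<^sup>2 + 1) / r ^ 3"
      have cp: "c > 0" unfolding c_def using rp by (simp add: add_nonneg_pos)
      have "\<bar>ff (Cs n) y - ff C y\<bar> \<le> c * eps n" if "n \<ge> N1" for n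
      proof -
        have "3 * eps n * (norm y)\<^sup>2 / r ^ 3 \<le> c * eps n" unfolding c_def using rp eps0[of n]
          by (simp add: field_simps mult_left_mono)
        then show ?thesis using ffb[OF that, of y] by linarith
      qed
      then obtain M where "\<forall>n\<ge>M. \<bar>ff (Cs n) y - ff C y\<bar> \<le> q / 2"
        using conv[of "\<lambda>n. ff (Cs n) y - ff C y" c "q/2"] cp q by auto
      then show "\<exists>no. \<forall>n\<ge>no. norm (ff (Cs n) y - ff C y) < q" using q by force
    qed
    show "\<exists>M. \<forall>n\<ge>M. \<forall>x\<in>cball 0 1. \<bar>ff (Cs n) x - ff C x\<bar> \<le> e'" if e': "e' > 0" for e'
    proof -
      define c where "c = 3 / r ^ 3"
      have cp: "c > 0" unfolding c_def using rp by simp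
      define X where "X n = (SUP x\<in>cball (0::'a) 1. \<bar>ff (Cs n) x - ff C x\<bar>)" for n
      have bx: "\<bar>ff (Cs n) x - ff C x\<bar> \<le> c * eps n" if "n \<ge> N1" "x \<in> cball 0 1" for n x
      proof -
        have "(norm x)\<^sup>2 \<le> 1" using that by (simp add: power_le_one)
        then have "3 * eps n * (norm x)\<^sup>2 / r ^ 3 \<le> c * eps n" unfolding c_def using rp eps0[of n]
          by (simp add: field_simps mult_left_mono)
        then show ?thesis using ffb[OF that(1), of x] by linarith
      qed
      obtain M where M: "\<forall>n\<ge>M. \<bar>c * eps n\<bar> \<le> e'"
        using conv[of "\<lambda>n. c * eps n" c e'] cp e' eps0 by (auto simp: abs_mult)
      have "\<forall>n\<ge>max M N1. \<forall>x\<in>cball 0 1. \<bar>ff (Cs n) x - ff C x\<bar> \<le> e'"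
        using M bx by fastforce
      then show ?thesis by blast
    qed
    show "e > 0" by (rule e)
  qed
  show ?thesis
  proof (rule LIMSEQ_I)
    fix q :: real assume q: "q > 0"
    obtain M where M: "\<forall>n\<ge>M. \<forall>x\<in>cball 0 1. norm (phi (Cs n) x - phi C x) \<le> q / 2"
      using main[of "q/2"] q by auto
    have "norm ((SUP x\<in>cball 0 1. norm (phi (Cs n) x - phi C x)) - 0) < q" if n: "n \<ge> M" for n
    proof -
      have ne: "cball (0::'a) 1 \<noteq> {}" by simp
      have le: "(SUP x\<in>cball 0 1. norm (phi (Cs n) x - phi C x)) \<le> q / 2"
        using M n by (intro cSUP_least[OF ne]) auto
      have bdd: "bdd_above ((\<lambda>x. norm (phi (Cs n) x - phi C x)) ` cball 0 1)"
        using M n by (intro bdd_aboveI[of _ "q/2"]) auto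
      have "0 \<le> norm (phi (Cs n) 0 - phi C 0)" by simp
      also have "\<dots> \<le> (SUP x\<in>cball 0 1. norm (phi (Cs n) x - phi C x))"
        by (rule cSUP_upper[OF _ bdd]) simp
      finally show ?thesis using le q by simp
    qed
    then show "\<exists>no. \<forall>n\<ge>no. norm ((SUP x\<in>cball 0 1. norm (phi (Cs n) x - phi C x)) - 0) < q" by blast
  qed
qed


end
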